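(* Let $n\geq 2$, $p\geq n+2$, and $$\Omega=\{(x',x_n)\in\mathbb R^{n-1}\times\mathbb R: |x'|<1,\ 0<x_n<\sqrt{1-|x'|^2}\}.$$ Then there is a constant $C>0$ depending only on $n,p$ such that the function $$w(x',x_n)=Cx_n-Cx_n^{\frac{2}{n+p}}(1-|x'|^2)^{\frac{n+p-2}{2(n+p)}}$$ is smooth and convex in $\Omega$ and satisfies $\det D^2 w\leq |w|^{-p}$ in $\Omega$ and $w=0$ on $\partial\Omega$. *)

theory Defs
  imports "HOL-Analysis.Analysis"
begin

text \<open>Points of R^n are vectors x :: real^'n; a distinguished coordinate k plays
  the role of x_n, and the remaining coordinates form x'.\<close>

definition xprime_sq :: "'n::finite \<Rightarrow> real^'n \<Rightarrow> real" where
  "xprime_sq k x = (\<Sum>i\<in>UNIV - {k}. (x $ i)^2)"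

definition Omega_dom :: "'n::finite \<Rightarrow> (real^'n) set" where
  "Omega_dom k = {x. xprime_sq k x < 1 \<and> 0 < x $ k \<and> x $ k < sqrt (1 - xprime_sq k x)}"

definition w_fun :: "real \<Rightarrow> real \<Rightarrow> 'n::finite \<Rightarrow> real^'n \<Rightarrow> real" where
  "w_fun C p k x = C * x $ k
     - C * (x $ k) powr (2 / (real CARD('n) + p))
         * (1 - xprime_sq k x) powr ((real CARD('n) + p - 2) / (2 * (real CARD('n) + p)))"

definition pderiv_dir :: "('a::euclidean_space \<Rightarrow> real) \<Rightarrow> 'a \<Rightarrow> 'a \<Rightarrow> real" where
  "pderiv_dir f e x = frechet_derivative f (at x) e"

fun Ck_on :: "nat \<Rightarrow> 'a::euclidean_space set \<Rightarrow> ('a \<Rightarrow> real) \<Rightarrow> bool" where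
  "Ck_on 0 S f = continuous_on S f"
| "Ck_on (Suc k) S f = (continuous_on S f \<and> f differentiable_on S \<and>
      (\<forall>e\<in>Basis. Ck_on k S (pderiv_dir f e)))"

definition smooth_on :: "'a::euclidean_space set \<Rightarrow> ('a \<Rightarrow> real) \<Rightarrow> bool" where
  "smooth_on S f = (\<forall>k. Ck_on k S f)"

definition hessian :: "(real^'n \<Rightarrow> real) \<Rightarrow> real^'n \<Rightarrow> real^'n^'n" where
  "hessian f x = (\<chi> i j. pderiv_dir (pderiv_dir f (axis j 1)) (axis i 1) x)"

end

theory Submission
  imports Defs
begin


lemma xprime_sq_nonneg: "0 \<le> xprime_sq k x"
  unfolding xprime_sq_def by (intro sum_nonneg) auto

lemma Omega_iff: "x \<in> Omega_dom k \<longleftrightarrow> 0 < x$k \<and> (x$k)^2 + xprime_sq k x < 1"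
proof
  assume "x \<in> Omega_dom k"
  then have h: "xprime_sq k x < 1" "0 < x$k" "x$k < sqrt (1 - xprime_sq k x)" by (auto simp: Omega_dom_def)
  then have "(x$k)^2 < (sqrt (1 - xprime_sq k x))^2"
    by (intro power_strict_mono) auto
  with h show "0 < x$k \<and> (x$k)^2 + xprime_sq k x < 1" by simp
next
  assume h: "0 < x$k \<and> (x$k)^2 + xprime_sq k x < 1"
  then have "xprime_sq k x < 1" by (smt (verit) zero_le_power2)
  moreover have "x$k < sqrt (1 - xprime_sq k x)"
    using h by (intro real_less_rsqrt) auto
  ultimately show "x \<in> Omega_dom k" using h by (auto simp: Omega_dom_def)
qed

lemma cont_xprime: "continuous_on S (xprime_sq k)"
  unfolding xprime_sq_def by (intro continuous_intros)

lemma open_Omega: "open (Omega_dom k)"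
proof -
  have "Omega_dom k = {x. 0 < x$k} \<inter> {x. (x$k)^2 + xprime_sq k x < 1}"
    by (auto simp: Omega_iff)
  moreover have "open {x::real^'a. 0 < x$k}"
    by (intro open_Collect_less continuous_intros)
  moreover have "open {x::real^'a. (x$k)^2 + xprime_sq k x < 1}"
    by (intro open_Collect_less continuous_intros cont_xprime)
  ultimately show ?thesis by auto
qed



inductive_set SF :: "(real^'n) set \<Rightarrow> ((real^'n) \<Rightarrow> real) set" for S where
  sf_const: "(\<lambda>x. c) \<in> SF S"
| sf_coord: "(\<lambda>x. x$i) \<in> SF S"
| sf_add: "f \<in> SF S \<Longrightarrow> g \<in> SF S \<Longrightarrow> (\<lambda>x. f x + g x) \<in> SF S"
| sf_mul: "f \<in> SF S \<Longrightarrow> g \<in> SF S \<Longrightarrow> (\<lambda>x. f x * g x) \<in> SF S"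
| sf_powr: "f \<in> SF S \<Longrightarrow> (\<forall>x\<in>S. 0 < f x) \<Longrightarrow> (\<lambda>x. f x powr r) \<in> SF S"

lemma sf_deriv:
  assumes "open S" "f \<in> SF S"
  shows "\<exists>g\<in>SF S. \<forall>x\<in>S. \<exists>D. (f has_derivative D) (at x) \<and> D v = g x"
  using assms(2)
proof induction
  case (sf_const c)
  show ?case
    by (rule bexI[where x="\<lambda>x. 0"]) (auto intro!: SF.intros exI[where x="\<lambda>h. 0"] has_derivative_const)
next
  case (sf_coord i)
  show ?case
    by (rule bexI[where x="\<lambda>x. v$i"])
       (auto intro!: SF.intros bounded_linear_imp_has_derivative)
next
  case (sf_add f g)
  then obtain gf gg where gf: "gf \<in> SF S" "\<forall>x\<in>S. \<exists>D. (f has_derivative D) (at x) \<and> D v = gf x"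
    and gg: "gg \<in> SF S" "\<forall>x\<in>S. \<exists>D. (g has_derivative D) (at x) \<and> D v = gg x" by blast
  show ?case
  proof (rule bexI[where x="\<lambda>x. gf x + gg x"])
    show "(\<lambda>x. gf x + gg x) \<in> SF S" using gf gg by (auto intro: SF.intros)
    show "\<forall>x\<in>S. \<exists>D. ((\<lambda>x. f x + g x) has_derivative D) (at x) \<and> D v = gf x + gg x"
    proof
      fix x assume "x \<in> S"
      then obtain D1 D2 where "(f has_derivative D1) (at x)" "D1 v = gf x"
        "(g has_derivative D2) (at x)" "D2 v = gg x" using gf gg by blast
      then show "\<exists>D. ((\<lambda>x. f x + g x) has_derivative D) (at x) \<and> D v = gf x + gg x"
        by (intro exI[where x="\<lambda>h. D1 h + D2 h"] conjI has_derivative_add) auto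
    qed
  qed
next
  case (sf_mul f g)
  then obtain gf gg where gf: "gf \<in> SF S" "\<forall>x\<in>S. \<exists>D. (f has_derivative D) (at x) \<and> D v = gf x"
    and gg: "gg \<in> SF S" "\<forall>x\<in>S. \<exists>D. (g has_derivative D) (at x) \<and> D v = gg x" by blast
  show ?case
  proof (rule bexI[where x="\<lambda>x. f x * gg x + gf x * g x"])
    show "(\<lambda>x. f x * gg x + gf x * g x) \<in> SF S" using gf gg sf_mul by (intro SF.intros) auto
    show "\<forall>x\<in>S. \<exists>D. ((\<lambda>x. f x * g x) has_derivative D) (at x) \<and> D v = f x * gg x + gf x * g x"
    proof
      fix x assume "x \<in> S"
      then obtain D1 D2 where "(f has_derivative D1) (at x)" "D1 v = gf x"
        "(g has_derivative D2) (at x)" "D2 v = gg x" using gf gg by blast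
      then show "\<exists>D. ((\<lambda>x. f x * g x) has_derivative D) (at x) \<and> D v = f x * gg x + gf x * g x"
        by (intro exI[where x="\<lambda>h. f x * D2 h + D1 h * g x"] conjI has_derivative_mult) auto
    qed
  qed
next
  case (sf_powr f r)
  then obtain gf where gf: "gf \<in> SF S" "\<forall>x\<in>S. \<exists>D. (f has_derivative D) (at x) \<and> D v = gf x"
    by blast
  show ?case
  proof (rule bexI[where x="\<lambda>x. f x powr r * (gf x * ((\<lambda>x. r) x * f x powr (-1)))"])
    show "(\<lambda>x. f x powr r * (gf x * ((\<lambda>x. r) x * f x powr (-1)))) \<in> SF S"
      using gf sf_powr by (intro SF.intros) auto
    show "\<forall>x\<in>S. \<exists>D. ((\<lambda>x. f x powr r) has_derivative D) (at x) \<and>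
        D v = f x powr r * (gf x * ((\<lambda>x. r) x * f x powr (-1)))"
    proof
      fix x assume x: "x \<in> S"
      then obtain D1 where D1: "(f has_derivative D1) (at x)" "D1 v = gf x" using gf by blast
      have pos: "0 < f x" using sf_powr x by auto
      have "((\<lambda>x. f x powr (\<lambda>x. r) x) has_derivative
         (\<lambda>h. (f x powr r) * ((\<lambda>h. 0) h * ln (f x) + D1 h * r / f x))) (at x)"
        by (rule has_derivative_powr[OF D1(1) has_derivative_const pos]) simp
      moreover have "(\<lambda>h. (f x powr r) * ((\<lambda>h. 0) h * ln (f x) + D1 h * r / f x)) v
          = f x powr r * (gf x * ((\<lambda>x. r) x * f x powr (-1)))"
        using pos D1(2) by (simp add: powr_minus_divide)
      ultimately show "\<exists>D. ((\<lambda>x. f x powr r) has_derivative D) (at x) \<and>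
        D v = f x powr r * (gf x * ((\<lambda>x. r) x * f x powr (-1)))" by blast
    qed
  qed
qed

lemma frechet_local:
  assumes "open S" "x \<in> S" "\<And>y. y \<in> S \<Longrightarrow> f y = g y"
  shows "frechet_derivative f (at x) = frechet_derivative g (at x)"
proof -
  have "\<And>D. (f has_derivative D) (at x) \<longleftrightarrow> (g has_derivative D) (at x)"
    using assms has_derivative_transform_within_open[OF _ assms(1,2)] by metis
  then show ?thesis unfolding frechet_derivative_def by simp
qed

lemma sf_Ck:
  assumes "open S"
  shows "\<forall>f. (\<exists>g\<in>SF S. \<forall>x\<in>S. f x = g x) \<longrightarrow> Ck_on k S f"
proof (induction k)
  case 0
  show ?case
  proof (intro allI impI)
    fix f assume "\<exists>g\<in>SF S. \<forall>x\<in>S. f x = g x"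
    then obtain g where g: "g \<in> SF S" "\<forall>x\<in>S. f x = g x" by blast
    have "continuous_on S g"
    proof (rule continuous_at_imp_continuous_on, rule ballI)
      fix x assume "x \<in> S"
      then obtain D where "(g has_derivative D) (at x)" using sf_deriv[OF assms g(1)] by blast
      then show "isCont g x" by (rule has_derivative_continuous)
    qed
    then have "continuous_on S f" using g(2) continuous_on_cong by metis
    then show "Ck_on 0 S f" by simp
  qed
next
  case (Suc k)
  show ?case
  proof (intro allI impI)
    fix f assume "\<exists>g\<in>SF S. \<forall>x\<in>S. f x = g x"
    then obtain g where g: "g \<in> SF S" "\<forall>x\<in>S. f x = g x" by blast
    have fd: "\<exists>D. (f has_derivative D) (at x) \<and> D v = h x"
      if xS: "x \<in> S" and hy: "\<forall>x\<in>S. \<exists>D. (g has_derivative D) (at x) \<and> D v = h x" for x v h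
    proof -
      obtain D where D: "(g has_derivative D) (at x)" "D v = h x" using hy xS by blast
      have "\<And>y. y \<in> S \<Longrightarrow> g y = f y" using g(2) by simp
      then have "(f has_derivative D) (at x)"
        using has_derivative_transform_within_open[OF D(1) assms xS] by blast
      then show ?thesis using D(2) by blast
    qed
    have fdx: "\<exists>D. (f has_derivative D) (at x)" if "x \<in> S" for x
    proof -
      obtain h where "\<forall>x\<in>S. \<exists>D. (g has_derivative D) (at x) \<and> D 0 = h x"
        using sf_deriv[OF assms g(1), of 0] by blast
      from fd[OF that this] show ?thesis by blast
    qed
    have "continuous_on S f"
    proof (rule continuous_at_imp_continuous_on, rule ballI)
      fix x assume "x \<in> S"
      then obtain D where "(f has_derivative D) (at x)" using fdx by blast
      then show "isCont f x" by (rule has_derivative_continuous)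
    qed
    moreover have "f differentiable_on S"
      unfolding differentiable_on_def
    proof
      fix x assume "x \<in> S"
      then obtain D where "(f has_derivative D) (at x)" using fdx by blast
      then have "(f has_derivative D) (at x within S)" by (rule has_derivative_at_withinI)
      then show "f differentiable at x within S"
        unfolding differentiable_def by blast
    qed
    moreover have "Ck_on k S (pderiv_dir f e)" for e
    proof -
      obtain h where h: "h \<in> SF S" "\<forall>x\<in>S. \<exists>D. (g has_derivative D) (at x) \<and> D e = h x"
        using sf_deriv[OF assms g(1)] by blast
      have "\<forall>x\<in>S. pderiv_dir f e x = h x"
      proof
        fix x assume x: "x \<in> S"
        obtain D where D: "(f has_derivative D) (at x)" "D e = h x" using fd[OF x h(2)] by blast
        have "frechet_derivative f (at x) = D" using frechet_derivative_at[OF D(1)] by simp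
        then show "pderiv_dir f e x = h x"
          unfolding pderiv_dir_def using D(2) by simp
      qed
      then have "\<exists>g\<in>SF S. \<forall>x\<in>S. pderiv_dir f e x = g x" using h(1) by blast
      then show ?thesis using Suc by blast
    qed
    ultimately show "Ck_on (Suc k) S f" by simp
  qed
qed



lemma sf_sum: "finite A \<Longrightarrow> (\<forall>i\<in>A. f i \<in> SF S) \<Longrightarrow> (\<lambda>x. \<Sum>i\<in>A. f i x) \<in> SF S"
proof (induction A rule: finite_induct)
  case empty
  then show ?case by (simp add: sf_const)
next
  case (insert a A)
  then show ?case by (simp add: sf_add)
qed

lemma w_SF: fixes k :: "'a::finite" shows "w_fun C p k \<in> SF (Omega_dom k)"
proof -
  let ?a = "2 / (real CARD('a) + p)" and ?b = "(real CARD('a) + p - 2) / (2 * (real CARD('a) + p))"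
  have eq: "w_fun C p k = (\<lambda>x. (\<lambda>x. C) x * x$k + ((\<lambda>x. -C) x * (x$k powr ?a)) *
      ((\<lambda>x. 1) x + (\<lambda>x. -1) x * (\<Sum> i\<in>UNIV-{k}. x$i * x$i)) powr ?b)"
    by (auto simp: w_fun_def xprime_sq_def power2_eq_square fun_eq_iff)
  have pos1: "\<forall>x\<in>Omega_dom k. 0 < x$k" by (auto simp: Omega_iff)
  have pos2: "\<forall>x\<in>Omega_dom k. 0 < 1 + -1 * (\<Sum> i\<in>UNIV-{k}. x$i * x$i)"
    by (auto simp: Omega_iff xprime_sq_def power2_eq_square) (smt (verit) mult_pos_pos)
  show ?thesis unfolding eq
    by (intro sf_add sf_mul sf_const sf_coord sf_powr sf_sum pos1 pos2 ballI finite) 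
qed

lemma w_smooth: "smooth_on (Omega_dom k) (w_fun C p k)"
  unfolding smooth_on_def using sf_Ck[OF open_Omega] w_SF by blast

lemma aux_ab: "(s::real) > 0 \<Longrightarrow> 2 / s + 2 * ((s - 2) / (2 * s)) = 1"
  by (simp add: field_simps)

lemma w_frontier:
  fixes k :: "'a::finite"
  assumes N: "real CARD('a) + p > 0"
  shows "\<forall>x\<in>frontier (Omega_dom k). w_fun C p k x = 0"
proof
  fix x assume x: "x \<in> frontier (Omega_dom k)"
  let ?K = "{x::real^'a. 0 \<le> x$k \<and> (x$k)^2 + xprime_sq k x \<le> 1}"
  have "closed ?K"
    unfolding Collect_conj_eq
    by (intro closed_Int closed_Collect_le continuous_intros cont_xprime)
  moreover have "Omega_dom k \<subseteq> ?K" by (auto simp: Omega_iff)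
  ultimately have "closure (Omega_dom k) \<subseteq> ?K" by (rule closure_minimal[rotated])
  moreover have "x \<in> closure (Omega_dom k)" "x \<notin> Omega_dom k"
    using x open_Omega[of k] by (auto simp: frontier_def interior_open)
  ultimately have h: "0 \<le> x$k" "(x$k)^2 + xprime_sq k x \<le> 1" "\<not> (0 < x$k \<and> (x$k)^2 + xprime_sq k x < 1)"
    by (auto simp: Omega_iff)
  show "w_fun C p k x = 0"
  proof (cases "x$k = 0")
    case True
    then show ?thesis by (simp add: w_fun_def)
  next
    case False
    then have t: "0 < x$k" using h by simp
    then have g: "1 - xprime_sq k x = (x$k)^2" using h by simp
    have "(x$k) powr (2 / (real CARD('a) + p)) * ((x$k)^2) powr ((real CARD('a) + p - 2) / (2 * (real CARD('a) + p)))
       = (x$k) powr (2 / (real CARD('a) + p) + 2 * ((real CARD('a) + p - 2) / (2 * (real CARD('a) + p))))"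
      using t by (simp add: powr_add powr_powr flip: powr_numeral)
    also have "2 / (real CARD('a) + p) + 2 * ((real CARD('a) + p - 2) / (2 * (real CARD('a) + p))) = 1"
      using aux_ab[OF N] .
    finally show ?thesis using t unfolding w_fun_def g by simp
  qed
qed



lemma young3:
  fixes a b X Y :: real
  assumes "a > 0" "b > 0" "a + b \<le> 1" "X > 0" "Y > 0"
  shows "X powr a * Y powr b \<le> a * X + b * Y + (1 - a - b)"
proof -
  define s where "s = a + b"
  have s: "s > 0" "s \<le> 1" using assms by (auto simp: s_def)
  have "X powr (a/s) * Y powr (b/s) \<le> (a/s) * X + (b/s) * Y"
    using s assms by (intro Youngs_inequality_0) (auto simp: s_def add_divide_distrib[symmetric])
  then have "(X powr (a/s) * Y powr (b/s)) powr s \<le> ((a/s) * X + (b/s) * Y) powr s"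
    using s assms by (intro powr_mono2) auto
  also have "(X powr (a/s) * Y powr (b/s)) powr s = X powr a * Y powr b"
    using s assms by (simp add: powr_mult powr_powr)
  also have "((a/s) * X + (b/s) * Y) powr s = ((a/s) * X + (b/s) * Y) powr s * 1 powr (1 - s)"
    by simp
  also have "\<dots> \<le> s * ((a/s) * X + (b/s) * Y) + (1 - s) * 1"
    using s assms by (intro Youngs_inequality_0) (auto intro: add_pos_pos)
  also have "s * ((a/s) * X + (b/s) * Y) = a * X + b * Y"
    using s(1) by (simp add: distrib_left)
  also have "a * X + b * Y + (1 - s) * 1 = a * X + b * Y + (1 - a - b)"
    by (simp add: s_def)
  finally show ?thesis .
qed

lemma hconc:
  fixes a b T1 T2 S1 S2 u v :: real
  assumes ab: "a > 0" "b > 0" "a + b \<le> 1"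
    and pos: "T1 > 0" "T2 > 0" "S1 > 0" "S2 > 0" and uv: "u \<ge> 0" "v \<ge> 0" "u + v = 1"
  shows "u * (T1 powr a * S1 powr b) + v * (T2 powr a * S2 powr b)
         \<le> (u * T1 + v * T2) powr a * (u * S1 + v * S2) powr b"
proof -
  define T where "T = u * T1 + v * T2"
  define S where "S = u * S1 + v * S2"
  have TS: "T > 0" "S > 0" using pos uv unfolding T_def S_def
    by (smt (verit) mult_nonneg_nonneg mult_pos_pos)+
  let ?M = "T powr a * S powr b"
  have M: "?M > 0" using TS by simp
  have key: "Ti powr a * Si powr b \<le> ?M * (a * (Ti/T) + b * (Si/S) + (1 - a - b))"
    if "Ti > 0" "Si > 0" for Ti Si
  proof -
    have "Ti powr a * Si powr b = ?M * ((Ti/T) powr a * (Si/S) powr b)"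
      using TS that by (simp add: powr_divide)
    also have "\<dots> \<le> ?M * (a * (Ti/T) + b * (Si/S) + (1 - a - b))"
      using M TS that ab by (intro mult_left_mono young3) auto
    finally show ?thesis .
  qed
  have "u * (T1 powr a * S1 powr b) + v * (T2 powr a * S2 powr b)
    \<le> u * (?M * (a * (T1/T) + b * (S1/S) + (1 - a - b))) + v * (?M * (a * (T2/T) + b * (S2/S) + (1 - a - b)))"
    using key pos uv by (intro add_mono mult_left_mono) auto
  also have "\<dots> = ?M * (a * ((u * T1 + v * T2)/T) + b * ((u * S1+v * S2)/S) + (u+v) * (1 - a - b))"
    using TS by (simp add: field_simps)
  also have "\<dots> = ?M" using TS uv unfolding T_def S_def by simp
  finally show ?thesis unfolding T_def S_def .
qed

lemma xprime_convex:
  assumes "u \<ge> 0" "v \<ge> 0" "u + v = 1"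
  shows "xprime_sq k (u *\<^sub>R x + v *\<^sub>R y) \<le> u * xprime_sq k x + v * xprime_sq k y"
proof -
  have "(u * x$i + v * y$i)^2 \<le> u * (x$i)^2 + v * (y$i)^2" for i
  proof -
    have "u * (x$i)^2 + v * (y$i)^2 - (u * x$i + v * y$i)^2 = u * v * (x$i - y$i)^2"
      using assms(3) by (simp add: power2_eq_square algebra_simps) (smt (verit) mult.commute mult_cancel_left1 ring_class.ring_distribs(2))
    moreover have "u * v * (x$i - y$i)^2 \<ge> 0" using assms by simp
    ultimately show ?thesis by linarith
  qed
  then have "xprime_sq k (u *\<^sub>R x + v *\<^sub>R y) \<le> (\<Sum>i\<in>UNIV-{k}. u * (x$i)^2 + v * (y$i)^2)"
    unfolding xprime_sq_def by (intro sum_mono) simp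
  also have "\<dots> = u * xprime_sq k x + v * xprime_sq k y"
    unfolding xprime_sq_def by (simp add: sum.distrib sum_distrib_left)
  finally show ?thesis .
qed

lemma convex_Omega: "convex (Omega_dom k)"
  unfolding convex_def
proof (intro ballI allI impI)
  fix x y and u v :: real assume x: "x \<in> Omega_dom k" and y: "y \<in> Omega_dom k" and uv: "0 \<le> u" "0 \<le> v" "u + v = 1"
  let ?z = "u *\<^sub>R x + v *\<^sub>R y"
  have hx: "0 < x$k" "(x$k)^2 + xprime_sq k x < 1" and hy: "0 < y$k" "(y$k)^2 + xprime_sq k y < 1"
    using x y by (auto simp: Omega_iff)
  have zk: "?z$k = u * x$k + v * y$k" by simp
  have "0 < ?z$k" unfolding zk using uv hx hy
    by (smt (verit) mult_nonneg_nonneg mult_pos_pos)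
  moreover have "(?z$k)^2 \<le> u * (x$k)^2 + v * (y$k)^2"
  proof -
    have "u * (x$k)^2 + v * (y$k)^2 - (u * x$k + v * y$k)^2 = u * v * (x$k - y$k)^2"
      using uv(3) by (simp add: power2_eq_square algebra_simps) (smt (verit) mult.commute mult_cancel_left1 ring_class.ring_distribs(2))
    moreover have "u * v * (x$k - y$k)^2 \<ge> 0" using uv by simp
    ultimately show ?thesis unfolding zk by linarith
  qed
  moreover have "xprime_sq k ?z \<le> u * xprime_sq k x + v * xprime_sq k y"
    using xprime_convex uv by blast
  moreover have "u * ((x$k)^2 + xprime_sq k x) + v * ((y$k)^2 + xprime_sq k y) < 1"
  proof (cases "u = 0")
    case True then show ?thesis using uv hy by simp
  next
    case False
    then have "u * ((x$k)^2 + xprime_sq k x) < u" using uv hx by simp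
    moreover have "v * ((y$k)^2 + xprime_sq k y) \<le> v" using uv hy
      by (simp add: mult_left_le)
    ultimately show ?thesis using uv by linarith
  qed
  ultimately show "?z \<in> Omega_dom k" unfolding Omega_iff by (simp add: algebra_simps)
qed

lemma aux_ab2: "(s::real) > 2 \<Longrightarrow> 2 / s > 0 \<and> (s - 2) / (2 * s) > 0 \<and> 2 / s + (s - 2) / (2 * s) \<le> 1"
  by (simp add: field_simps)

lemma w_convex:
  fixes k :: "'a::finite"
  assumes C: "C > 0" and N: "real CARD('a) + p > 2"
  shows "convex_on (Omega_dom k) (w_fun C p k)"
  unfolding convex_on_def
proof (intro conjI convex_Omega ballI allI impI)
  let ?a = "2 / (real CARD('a) + p)" and ?b = "(real CARD('a) + p - 2) / (2 * (real CARD('a) + p))"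
  have ab: "?a > 0" "?b > 0" "?a + ?b \<le> 1" using aux_ab2[OF N] by auto
  fix x y and u v :: real assume x: "x \<in> Omega_dom k" and y: "y \<in> Omega_dom k" and uv: "0 \<le> u" "0 \<le> v" "u + v = 1"
  let ?z = "u *\<^sub>R x + v *\<^sub>R y"
  let ?g = "\<lambda>x. 1 - xprime_sq k x"
  have hx: "0 < x$k" "0 < ?g x" and hy: "0 < y$k" "0 < ?g y"
    using x y by (auto simp: Omega_iff) (smt (verit) zero_le_power2)+
  have zk: "?z$k = u * x$k + v * y$k" by simp
  have gz: "u * ?g x + v * ?g y \<le> ?g ?z"
    using xprime_convex[OF uv, of k x y] uv(3) by (simp add: algebra_simps)
  have gpos: "0 < u * ?g x + v * ?g y" using hx hy uv
    by (smt (verit) mult_nonneg_nonneg mult_pos_pos)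
  have tz: "0 < ?z$k" unfolding zk using uv hx hy
    by (smt (verit) mult_nonneg_nonneg mult_pos_pos)
  have "u * ((x$k) powr ?a * ?g x powr ?b) + v * ((y$k) powr ?a * ?g y powr ?b)
      \<le> (?z$k) powr ?a * (u * ?g x + v * ?g y) powr ?b"
    unfolding zk using hconc[OF ab hx(1) hy(1) hx(2) hy(2) uv] .
  also have "\<dots> \<le> (?z$k) powr ?a * ?g ?z powr ?b"
    using gz gpos tz ab by (intro mult_left_mono powr_mono2) auto
  finally have main: "u * ((x$k) powr ?a * ?g x powr ?b) + v * ((y$k) powr ?a * ?g y powr ?b)
      \<le> (?z$k) powr ?a * ?g ?z powr ?b" .
  have "w_fun C p k ?z = C * ?z$k - C * ((?z$k) powr ?a * ?g ?z powr ?b)"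
    by (simp add: w_fun_def)
  also have "\<dots> \<le> C * ?z$k - C * (u * ((x$k) powr ?a * ?g x powr ?b) + v * ((y$k) powr ?a * ?g y powr ?b))"
    using main C by simp
  also have "\<dots> = u * w_fun C p k x + v * w_fun C p k y"
    unfolding zk w_fun_def by (simp add: algebra_simps)
  finally show "w_fun C p k ?z \<le> u * w_fun C p k x + v * w_fun C p k y" .
qed



lemma detB_base:
  fixes d :: "'n::finite \<Rightarrow> real" and v :: "real^'n"
  shows "det (\<chi> i. if i = m then v else axis i (d i)) = v$m * (\<Prod>j\<in>UNIV-{m}. d j)"
proof -
  have e: "(\<Sum>x\<in>UNIV. v$x * (if i = x then 1 else 0)) = v$i" for i
  proof -
    have "(\<Sum>x\<in>UNIV. v$x * (if i = x then 1 else 0)) = (\<Sum>x\<in>UNIV. if i = x then v$x else 0)"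
      by (rule sum.cong) auto
    then show ?thesis by simp
  qed
  have v: "v = (\<Sum>j\<in>UNIV. v$j *\<^sub>R axis j 1)"
    by (simp add: vec_eq_iff sum_component axis_def e)
  have "det (\<chi> i. if i = m then v else axis i (d i)) =
        det (\<chi> i. if i = m then (\<Sum>j\<in>UNIV. (\<lambda>i j. v$j *\<^sub>R axis j 1) i j) else axis i (d i))"
    by (subst v) simp
  also have "\<dots> = (\<Sum>j\<in>UNIV. det (\<chi> i. if i = m then v$j *\<^sub>R axis j 1 else axis i (d i)))"
    by (rule det_linear_row_sum) simp
  also have "\<dots> = det (\<chi> i. if i = m then v$m *\<^sub>R axis m 1 else axis i (d i))"
  proof -
    have z: "(\<Sum>j\<in>UNIV - {m}. det (\<chi> i. if i = m then v$j *\<^sub>R axis j 1 else axis i (d i))) = 0"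
    proof (rule sum.neutral, rule ballI)
      fix j assume "j \<in> UNIV - {m}"
      then have "column m (\<chi> i. if i = m then v$j *\<^sub>R axis j 1 else axis i (d i)) = 0"
        by (auto simp: column_def vec_eq_iff axis_def)
      then show "det (\<chi> i. if i = m then v$j *\<^sub>R axis j 1 else axis i (d i)) = 0"
        by (rule det_zero_column)
    qed
    show ?thesis by (subst sum.remove[of _ m]) (auto simp: z)
  qed
  also have "\<dots> = (\<Prod>i\<in>UNIV. (\<chi> i. if i = m then v$m *\<^sub>R axis m 1 else axis i (d i)) $ i $ i)"
    by (rule det_diagonal) (auto simp: axis_def)
  also have "\<dots> = (\<Prod>i\<in>UNIV. if i = m then v$m else d i)"
    by (intro prod.cong) (auto simp: axis_def)
  also have "\<dots> = v$m * (\<Prod>j\<in>UNIV-{m}. d j)"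
    by (subst prod.remove[of _ m]) (auto intro!: prod.cong)
  finally show ?thesis .
qed

lemma detB:
  fixes d w :: "'n::finite \<Rightarrow> real" and v :: "real^'n"
  assumes "m \<notin> T"
  shows "det (\<chi> i. if i = m then v else if i \<in> T then axis i (d i) + w i *\<^sub>R v else axis i (d i))
     = v$m * (\<Prod>j\<in>UNIV-{m}. d j)"
  using finite[of T] assms
proof (induction T rule: finite_induct)
  case empty
  then show ?case using detB_base[of m v d] by (simp cong: if_cong)
next
  case (insert z T)
  let ?c = "\<lambda>i. if i = m then v else if i \<in> T then axis i (d i) + w i *\<^sub>R v else axis i (d i)"
  have zm: "z \<noteq> m" using insert by auto
  have "(\<chi> i. if i = m then v else if i \<in> insert z T then axis i (d i) + w i *\<^sub>R v else axis i (d i))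
     = (\<chi> i. if i = z then axis i (d i) + w i *\<^sub>R v else ?c i)"
    using zm by (auto simp: vec_eq_iff)
  moreover have "det (\<chi> i. if i = z then axis i (d i) + w i *\<^sub>R v else ?c i) =
     det (\<chi> i. if i = z then axis i (d i) else ?c i) + det (\<chi> i. if i = z then w i *\<^sub>R v else ?c i)"
    by (rule det_row_add)
  moreover have "(\<chi> i. if i = z then axis i (d i) else ?c i) =
      (\<chi> i. if i = m then v else if i \<in> T then axis i (d i) + w i *\<^sub>R v else axis i (d i))"
    using insert by (auto simp: vec_eq_iff)
  moreover have "det (\<chi> i. if i = z then w i *\<^sub>R v else ?c i) = 0"
  proof -
    have "(\<chi> i. if i = z then w i *\<^sub>R v else ?c i) = (\<chi> i. if i = z then w z *s (\<lambda>i. v) i else ?c i)"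
      by (auto simp: vec_eq_iff)
    moreover have "det (\<chi> i. if i = z then w z *s (\<lambda>i. v) i else ?c i) = w z * det (\<chi> i. if i = z then (\<lambda>i. v) i else ?c i)"
      by (rule det_row_mul)
    moreover have "det (\<chi> i. if i = z then (\<lambda>i. v) i else ?c i) = 0"
      by (rule det_identical_rows[OF zm]) (auto simp: row_def vec_eq_iff zm)
    ultimately show ?thesis by simp
  qed
  ultimately show ?case using insert by simp
qed

lemma detL:
  fixes d w :: "'n::finite \<Rightarrow> real" and v :: "real^'n"
  shows "det (\<chi> i. if i \<in> T then axis i (d i) + w i *\<^sub>R v else axis i (d i))
     = (\<Prod>i\<in>UNIV. d i) + (\<Sum>i\<in>T. w i * v$i * (\<Prod>j\<in>UNIV-{i}. d j))"
  using finite[of T]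
proof (induction T rule: finite_induct)
  case empty
  have "det (\<chi> i. axis i (d i)) = (\<Prod>i\<in>UNIV. (\<chi> i. axis i (d i)) $ i $ i)"
    by (rule det_diagonal) (auto simp: axis_def)
  then show ?case by (simp add: axis_def)
next
  case (insert z T)
  let ?c = "\<lambda>i. if i \<in> T then axis i (d i) + w i *\<^sub>R v else axis i (d i)"
  have "(\<chi> i. if i \<in> insert z T then axis i (d i) + w i *\<^sub>R v else axis i (d i))
     = (\<chi> i. if i = z then axis i (d i) + w i *\<^sub>R v else ?c i)"
    by (auto simp: vec_eq_iff)
  moreover have "det (\<chi> i. if i = z then axis i (d i) + w i *\<^sub>R v else ?c i) =
     det (\<chi> i. if i = z then axis i (d i) else ?c i) + det (\<chi> i. if i = z then w i *\<^sub>R v else ?c i)"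
    by (rule det_row_add)
  moreover have "(\<chi> i. if i = z then axis i (d i) else ?c i) = (\<chi> i. ?c i)"
    using insert by (auto simp: vec_eq_iff)
  moreover have "det (\<chi> i. if i = z then w i *\<^sub>R v else ?c i) = w z * v$z * (\<Prod>j\<in>UNIV-{z}. d j)"
  proof -
    have "(\<chi> i. if i = z then w i *\<^sub>R v else ?c i) = (\<chi> i. if i = z then w z *s (\<lambda>i. v) i else ?c i)"
      by (auto simp: vec_eq_iff)
    moreover have "det (\<chi> i. if i = z then w z *s (\<lambda>i. v) i else ?c i) = w z * det (\<chi> i. if i = z then (\<lambda>i. v) i else ?c i)"
      by (rule det_row_mul)
    moreover have "det (\<chi> i. if i = z then (\<lambda>i. v) i else ?c i) = v$z * (\<Prod>j\<in>UNIV-{z}. d j)"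
      using detB[where m=z and T=T and d=d and w=w and v=v] insert by simp
    ultimately show ?thesis by simp
  qed
  ultimately show ?case using insert by (simp add: algebra_simps)
qed

lemma det_diag_rank1:
  fixes d w :: "'n::finite \<Rightarrow> real" and v :: "real^'n"
  shows "det (\<chi> i j. (if i = j then d i else 0) + w i * v$j)
     = (\<Prod>i\<in>UNIV. d i) + (\<Sum>i\<in>UNIV. w i * v$i * (\<Prod>j\<in>UNIV-{i}. d j))"
proof -
  have "(\<chi> i j. (if i = j then d i else 0) + w i * v$j) =
     (\<chi> i. if i \<in> UNIV then axis i (d i) + w i *\<^sub>R v else axis i (d i))"
    by (auto simp: vec_eq_iff axis_def)
  then show ?thesis using detL[of UNIV d w v] by simp
qed



lemma final_ineq:
  fixes t g r C p a b phi lam mu nu al :: real and n :: nat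
  assumes t: "t > 0" and g: "g > 0" "g \<le> 1" and r: "r \<ge> 0" "r \<le> 1"
    and C: "C = 1/3" and n: "n \<ge> 2" and p: "p \<ge> real n + 2"
    and a: "a = 2 / (real n + p)" and b: "b = (real n + p - 2) / (2 * (real n + p))"
    and phi: "phi = t powr a * g powr b" and pt: "phi > t"
    and lam: "lam = 2*C*b*phi/g" and mu: "mu = 4*C*b*(1-b)*phi/g^2"
    and nu: "nu = 2*C*a*b*phi/(t*g)" and al: "al = C*a*(1-a)*phi/t^2"
  shows "al * lam^(n-1) + mu * r * (al - nu^2/mu) * lam^(n-2) \<le> \<bar>C * t - C * phi\<bar> powr (-p)"
proof -
  define s where "s = real n + p"
  have s: "s \<ge> 6" using n p by (simp add: s_def)
  have as: "a = 2 / s" and bs: "b = (s - 2) / (2 * s)" by (simp_all add: a b s_def)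
  have a1: "0 < a" "a \<le> 1" "a * s = 2" using s by (auto simp: as field_simps)
  have b0: "0 < b" "b < 1" "2 * b \<le> 1" "1 - a - b \<ge> 0" "b * s = (s - 2) / 2"
    using s by (auto simp: as bs field_simps)
  have b1: "0 < b" "b < 1" "2 * b \<le> 1" "b * s = real n + (p - real n - 2) / 2" "1 - a - b \<ge> 0"
    using b0 by (auto simp: s_def field_simps)
  have ph: "phi > 0" using pt t by simp
  obtain m where m: "n = m + 2" using n by (metis add.commute le_Suc_ex)
  have d1: "al - nu^2/mu = C*a*phi*(1-a-b)/((1-b)*t^2)"
    using t g ph b1 a1 C unfolding mu nu al by (simp add: field_simps power2_eq_square)
  have d2: "al*lam + mu*r*(al - nu^2/mu) = 2*C^2*a*b*phi^2/(t^2*g^2) * ((1-a)*g + 2*(1-a-b)*r)"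
    unfolding d1 using t g ph b1 a1 C unfolding mu lam al by (simp add: field_simps power2_eq_square)
  have d3: "lam^m = (2*C*b)^m * phi^m / g^m" unfolding lam by (simp add: power_divide power_mult_distrib)
  have E: "al * lam^(n-1) + mu * r * (al - nu^2/mu) * lam^(n-2)
      = (2*C*b)^(n-1) * C * a * phi^n / (t^2 * g^n) * ((1-a)*g + 2*(1-a-b)*r)"
  proof -
    have "al * lam^(n-1) + mu * r * (al - nu^2/mu) * lam^(n-2) = lam^m * (al*lam + mu*r*(al - nu^2/mu))"
      unfolding m by (simp add: algebra_simps)
    also have "\<dots> = (2*C*b)^m * phi^m / g^m * (2*C^2*a*b*phi^2/(t^2*g^2) * ((1-a)*g + 2*(1-a-b)*r))"
      unfolding d2 d3 ..
    also have "\<dots> = (2*C*b)^(n-1) * C * a * phi^n / (t^2 * g^n) * ((1-a)*g + 2*(1-a-b)*r)"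
      unfolding m using t g by (simp add: field_simps power2_eq_square)
    finally show ?thesis .
  qed
  also have "\<dots> \<le> C^(n-1) * C * 1 * phi^n / (t^2 * g^n) * 3"
  proof -
    have "(2*C*b)^(n-1) \<le> C^(n-1)" using C b1 by (intro power_mono) auto
    moreover have "(1-a)*g + 2*(1-a-b)*r \<le> 3"
    proof -
      have "(1-a)*g \<le> 1" using a1 g by (smt (verit) mult_le_one)
      moreover have "(1-a-b)*r \<le> 1" using a1 b1 r by (smt (verit) mult_le_one)
      ultimately show ?thesis by linarith
    qed
    moreover have "(1-a)*g + 2*(1-a-b)*r \<ge> 0" using a1 b1 g r by simp
    moreover have "C > 0" using C by simp
    moreover have "0 \<le> (2*C*b)^(n-1)" using C b1 by simp
    moreover have "0 \<le> phi^n / (t^2 * g^n)" using ph t g by simp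
    ultimately have "(2*C*b)^(n-1) * C * a * (phi^n / (t^2 * g^n)) * ((1-a)*g + 2*(1-a-b)*r)
        \<le> C^(n-1) * C * 1 * (phi^n / (t^2 * g^n)) * 3"
      using a1 by (intro mult_mono mult_nonneg_nonneg) auto
    then show ?thesis by simp
  qed
  also have "\<dots> = 3 * C^n * phi^n / (t^2 * g^n)"
    using m by (simp add: field_simps)
  also have "\<dots> \<le> (C * phi) powr (-p)"
  proof -
    have "(C*phi) powr p * (C*phi)^n = (C*phi) powr s"
      using C ph by (simp add: s_def powr_add powr_realpow[symmetric])
    also have "\<dots> = C powr s * (t powr (a * s) * g powr (b * s))"
      using C ph t g by (simp add: powr_mult phi powr_powr)
    also have "\<dots> = C powr s * (t^2 * (g^n * g powr ((p - real n - 2)/2)))"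
      using t g b1 a1 by (simp add: powr_add powr_realpow)
    also have "\<dots> \<le> (1/3) * (t^2 * (g^n * 1))"
    proof -
      have "(1/3::real) powr s \<le> (1/3) powr 1" using s by (intro powr_mono') auto
      then have c1: "C powr s \<le> 1/3" unfolding C by simp
      have g1: "g powr ((p - real n - 2)/2) \<le> 1" using g p by (intro powr_le1) auto
      show ?thesis using c1 g1 t g by (intro mult_mono) auto
    qed
    finally have *: "(C*phi) powr p * (C*phi)^n \<le> t^2 * g^n / 3" by simp
    have "3 * C^n * phi^n / (t^2 * g^n) \<le> 1 / (C*phi) powr p"
    proof -
      have Cp: "C > 0" using C by simp
      have pp: "(C*phi) powr p > 0" using Cp ph by simp
      have "3 * C^n * phi^n = 3 * (C*phi)^n" by (simp add: power_mult_distrib)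
      also have "\<dots> * (C*phi) powr p \<le> t^2 * g^n" using * by (simp add: mult_ac)
      finally have "3 * C^n * phi^n * (C*phi) powr p \<le> t^2 * g^n" .
      then show ?thesis using pp t g by (simp add: field_simps)
    qed
    then show ?thesis by (simp add: powr_minus_divide)
  qed
  also have "\<dots> \<le> \<bar>C * t - C * phi\<bar> powr (-p)"
    using C pt t p by (intro powr_mono2') (auto simp: abs_if)
  finally show ?thesis .
qed



lemma has_derivative_vecnth[derivative_intros]:
  "(f has_derivative f') F \<Longrightarrow> ((\<lambda>x. f x $ i) has_derivative (\<lambda>h. f' h $ i)) F"
  using bounded_linear.has_derivative[OF bounded_linear_vec_nth] by blast

definition ga :: "'n::finite \<Rightarrow> real^'n \<Rightarrow> real" where "ga k x = 1 - xprime_sq k x"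
definition phi :: "real \<Rightarrow> real \<Rightarrow> 'n::finite \<Rightarrow> real^'n \<Rightarrow> real" where
  "phi a b k x = (x$k) powr a * (ga k x) powr b"
definition SX :: "'n::finite \<Rightarrow> real^'n \<Rightarrow> real^'n \<Rightarrow> real" where
  "SX k x h = (\<Sum>i\<in>UNIV-{k}. 2 * x$i * h$i)"

lemma D_xprime: "(xprime_sq k has_derivative SX k x) (at x)"
  unfolding xprime_sq_def[abs_def] SX_def[abs_def]
  by (auto intro!: derivative_eq_intros simp: fun_eq_iff sum_distrib_left intro!: sum.cong)

lemma D_ga: "(ga k has_derivative (\<lambda>h. - SX k x h)) (at x)"
  unfolding ga_def[abs_def]
  by (auto intro!: derivative_eq_intros D_xprime)

lemma D_phi:
  assumes "x$k > 0" "ga k x > 0"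
  shows "(phi a b k has_derivative (\<lambda>h. phi a b k x * (a * h$k / x$k - b * SX k x h / ga k x))) (at x)"
  unfolding phi_def[abs_def]
  using assms by (auto intro!: derivative_eq_intros D_ga simp: fun_eq_iff field_simps)



lemma axis_nth': "(axis j (1::real) :: real^'n::finite) $ i = (if i = j then 1 else 0)"
  by (simp add: axis_def)

lemma SX_axis: "SX k x (axis j 1) = (if j = k then 0 else 2 * x$j)"
proof -
  have "SX k x (axis j 1) = (\<Sum>i\<in>UNIV-{k}. if i = j then 2 * x$j else 0)"
    unfolding SX_def by (rule sum.cong) (auto simp: axis_nth')
  then show ?thesis by (simp add: sum.delta' split: if_splits)
qed

lemma Omega_pos: "x \<in> Omega_dom k \<Longrightarrow> x$k > 0 \<and> ga k x > 0"
  unfolding Omega_iff ga_def by (smt (verit) zero_le_power2)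

definition G :: "real \<Rightarrow> real \<Rightarrow> real \<Rightarrow> 'n::finite \<Rightarrow> 'n \<Rightarrow> real^'n \<Rightarrow> real" where
  "G a b C k j x = (if j = k then C - C * a * phi a b k x / x$k else 2 * C * b * phi a b k x * x$j / ga k x)"

lemma pd1:
  fixes k :: "'n::finite"
  assumes "x \<in> Omega_dom k"
  shows "pderiv_dir (\<lambda>x. C * x$k - C * phi a b k x) (axis j 1) x = G a b C k j x"
proof -
  have pos: "x$k > 0" "ga k x > 0" using Omega_pos[OF assms] by auto
  have "((\<lambda>x. C * x$k - C * phi a b k x) has_derivative
     (\<lambda>h. C * h$k - C * (phi a b k x * (a * h$k / x$k - b * SX k x h / ga k x)))) (at x)"
    by (auto intro!: derivative_eq_intros D_phi[OF pos])
  then have "pderiv_dir (\<lambda>x. C * x$k - C * phi a b k x) (axis j 1) x =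
     C * (axis j 1 :: real^'n) $ k - C * (phi a b k x * (a * (axis j 1 :: real^'n) $ k / x$k - b * SX k x (axis j 1) / ga k x))"
    unfolding pderiv_dir_def by (simp add: frechet_derivative_at[symmetric])
  also have "\<dots> = G a b C k j x"
    unfolding G_def SX_axis axis_nth' using pos by (auto simp: field_simps)
  finally show ?thesis .
qed

lemma DG:
  fixes k :: "'n::finite"
  assumes pos: "x$k > 0" "ga k x > 0"
  shows "pderiv_dir (G a b C k j) (axis i 1) x =
    (if j = k then (if i = k then C*a*(1-a)*phi a b k x/(x$k)^2 else 2*C*a*b*phi a b k x*x$i/(x$k*ga k x))
     else (if i = k then 2*C*a*b*phi a b k x*x$j/(x$k*ga k x)
           else (if i = j then 2*C*b*phi a b k x/ga k x else 0) + 4*C*b*(1-b)*phi a b k x*x$i*x$j/(ga k x)^2))"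
proof (cases "j = k")
  case True
  have "(G a b C k j) = (\<lambda>x. C - C * a * phi a b k x / x$k)"
    using True by (simp add: G_def fun_eq_iff)
  moreover have "((\<lambda>x. C - C * a * phi a b k x / x$k) has_derivative
      (\<lambda>h. - (C * a * ((phi a b k x * (a * h$k / x$k - b * SX k x h / ga k x)) * x$k - phi a b k x * h$k) / (x$k * x$k)))) (at x)"
    using pos by (auto intro!: derivative_eq_intros D_phi[OF pos] simp: fun_eq_iff field_simps)
  ultimately have eq: "pderiv_dir (G a b C k j) (axis i 1) x =
     - (C * a * ((phi a b k x * (a * (axis i 1 :: real^'n)$k / x$k - b * SX k x (axis i 1) / ga k x)) * x$k - phi a b k x * (axis i 1 :: real^'n)$k) / (x$k * x$k))"
    unfolding pderiv_dir_def by (simp add: frechet_derivative_at[symmetric])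
  show ?thesis unfolding eq
    using pos True by (cases "i = k") (simp_all add: axis_nth' SX_axis field_simps power2_eq_square)
next
  case False
  have "(G a b C k j) = (\<lambda>x. 2 * C * b * phi a b k x * x$j / ga k x)"
    using False by (simp add: G_def fun_eq_iff)
  moreover have "((\<lambda>x. 2 * C * b * phi a b k x * x$j / ga k x) has_derivative
      (\<lambda>h. 2 * C * b * (((phi a b k x * (a * h$k / x$k - b * SX k x h / ga k x)) * x$j + phi a b k x * h$j) / ga k x
          + phi a b k x * x$j * SX k x h / (ga k x * ga k x)))) (at x)"
    using pos by (auto intro!: derivative_eq_intros D_phi[OF pos] D_ga simp: fun_eq_iff field_simps)
  ultimately have eq: "pderiv_dir (G a b C k j) (axis i 1) x =
     2 * C * b * (((phi a b k x * (a * (axis i 1 :: real^'n)$k / x$k - b * SX k x (axis i 1) / ga k x)) * x$j + phi a b k x * (axis i 1 :: real^'n)$j) / ga k x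
          + phi a b k x * x$j * SX k x (axis i 1) / (ga k x * ga k x))"
    unfolding pderiv_dir_def by (simp add: frechet_derivative_at[symmetric])
  show ?thesis unfolding eq
    using pos False by (cases "i = k"; cases "i = j") (simp_all add: axis_nth' SX_axis field_simps power2_eq_square)
qed



lemma prod_if_k:
  fixes k :: "'n::finite"
  shows "(\<Prod>i\<in>UNIV. if i = k then A else B) = (A::real) * B^(CARD('n) - 1)"
proof -
  have "(\<Prod>i\<in>UNIV. if i = k then A else B) = A * (\<Prod>i\<in>UNIV-{k}. if i = k then A else B)"
    by (subst prod.remove[of _ k]) auto
  also have "(\<Prod>i\<in>UNIV-{k}. if i = k then A else B) = (\<Prod>i\<in>UNIV-{k}. B)"
    by (rule prod.cong) auto
  also have "\<dots> = B^(CARD('n) - 1)" by (simp add: card_Diff_singleton)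
  finally show ?thesis .
qed

lemma det_struct:
  fixes k :: "'n::finite" and x :: "real^'n" and al lam mu nu :: real
  assumes mu: "mu \<noteq> 0" and n: "CARD('n) \<ge> 2"
  shows "det (\<chi> i j. if j = k then (if i = k then al else nu * x$i)
                   else (if i = k then nu * x$j else (if i = j then lam else 0) + mu * x$i * x$j))
     = al * lam^(CARD('n)-1) + mu * xprime_sq k x * (al - nu^2/mu) * lam^(CARD('n)-2)"
proof -
  define d where "d i = (if i = k then al - nu^2/mu else lam)" for i
  define wv where "wv i = (if i = k then nu/mu else x$i)" for i
  define vv :: "real^'n" where "vv = (\<chi> j. if j = k then nu else mu * x$j)"
  have M: "(\<chi> i j. if j = k then (if i = k then al else nu * x$i)
                   else (if i = k then nu * x$j else (if i = j then lam else 0) + mu * x$i * x$j))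
      = (\<chi> i j. (if i = j then d i else 0) + wv i * vv$j)"
    using mu by (auto simp: vec_eq_iff d_def wv_def vv_def power2_eq_square field_simps)
  have P: "(\<Prod>i\<in>UNIV. d i) = (al - nu^2/mu) * lam^(CARD('n)-1)"
    unfolding d_def by (rule prod_if_k)
  have Pi: "(\<Prod>j\<in>UNIV-{i}. d j) = (al - nu^2/mu) * lam^(CARD('n)-2)" if "i \<noteq> k" for i
  proof -
    have "(\<Prod>j\<in>UNIV-{i}. d j) = d k * (\<Prod>j\<in>UNIV-{i}-{k}. d j)"
      using that by (subst prod.remove[of _ k]) auto
    also have "(\<Prod>j\<in>UNIV-{i}-{k}. d j) = (\<Prod>j\<in>UNIV-{i}-{k}. lam)"
      by (rule prod.cong) (auto simp: d_def)
    also have "\<dots> = lam^(CARD('n)-2)"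
      using that by (simp add: card_Diff_singleton numeral_2_eq_2)
    finally show ?thesis by (simp add: d_def)
  qed
  have Pk: "(\<Prod>j\<in>UNIV-{k}. d j) = lam^(CARD('n)-1)"
  proof -
    have "(\<Prod>j\<in>UNIV-{k}. d j) = (\<Prod>j\<in>UNIV-{k}. lam)"
      by (rule prod.cong) (auto simp: d_def)
    then show ?thesis by (simp add: card_Diff_singleton)
  qed
  have S: "(\<Sum>i\<in>UNIV. wv i * vv$i * (\<Prod>j\<in>UNIV-{i}. d j))
     = nu^2/mu * lam^(CARD('n)-1) + mu * xprime_sq k x * (al - nu^2/mu) * lam^(CARD('n)-2)"
  proof -
    have "(\<Sum>i\<in>UNIV. wv i * vv$i * (\<Prod>j\<in>UNIV-{i}. d j))
       = wv k * vv$k * (\<Prod>j\<in>UNIV-{k}. d j) + (\<Sum>i\<in>UNIV-{k}. wv i * vv$i * (\<Prod>j\<in>UNIV-{i}. d j))"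
      by (subst sum.remove[of _ k]) auto
    also have "(\<Sum>i\<in>UNIV-{k}. wv i * vv$i * (\<Prod>j\<in>UNIV-{i}. d j))
       = (\<Sum>i\<in>UNIV-{k}. (mu * (al - nu^2/mu) * lam^(CARD('n)-2)) * (x$i)^2)"
      by (rule sum.cong) (auto simp: Pi wv_def vv_def power2_eq_square)
    also have "\<dots> = mu * xprime_sq k x * (al - nu^2/mu) * lam^(CARD('n)-2)"
      unfolding xprime_sq_def by (simp add: sum_distrib_left sum_distrib_right mult_ac)
    finally show ?thesis using mu by (simp add: Pk wv_def vv_def power2_eq_square)
  qed
  show ?thesis unfolding M det_diag_rank1 P S using mu by (simp add: algebra_simps)
qed



lemma hess_eq:
  fixes k :: "'n::finite" and a b C :: real
  assumes x: "x \<in> Omega_dom k"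
  shows "hessian (\<lambda>x. C * x$k - C * phi a b k x) x =
    (\<chi> i j. (if j = k then (if i = k then C*a*(1-a)*phi a b k x/(x$k)^2 else 2*C*a*b*phi a b k x*x$i/(x$k*ga k x))
     else (if i = k then 2*C*a*b*phi a b k x*x$j/(x$k*ga k x)
           else (if i = j then 2*C*b*phi a b k x/ga k x else 0) + 4*C*b*(1-b)*phi a b k x*x$i*x$j/(ga k x)^2)))"
proof -
  have pos: "x$k > 0" "ga k x > 0" using Omega_pos[OF x] by auto
  have e: "pderiv_dir (pderiv_dir (\<lambda>x. C * x$k - C * phi a b k x) (axis j 1)) (axis i 1) x
       = pderiv_dir (G a b C k j) (axis i 1) x" for i j
  proof -
    have fr: "frechet_derivative (pderiv_dir (\<lambda>x. C * x$k - C * phi a b k x) (axis j 1)) (at x)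
        = frechet_derivative (G a b C k j) (at x)"
      by (rule frechet_local[OF open_Omega x]) (rule pd1)
    have "pderiv_dir (pderiv_dir (\<lambda>x. C * x$k - C * phi a b k x) (axis j 1)) (axis i 1) x
       = frechet_derivative (pderiv_dir (\<lambda>x. C * x$k - C * phi a b k x) (axis j 1)) (at x) (axis i 1)"
      by (rule pderiv_dir_def)
    also have "\<dots> = frechet_derivative (G a b C k j) (at x) (axis i 1)" by (simp only: fr)
    also have "\<dots> = pderiv_dir (G a b C k j) (axis i 1) x" by (rule pderiv_dir_def[symmetric])
    finally show ?thesis .
  qed
  show ?thesis
    unfolding hessian_def e DG[OF pos] ..
qed

theorem lemma2p7:
  fixes k :: "'n::finite" and p :: real
  assumes "CARD('n) \<ge> 2" and "p \<ge> real CARD('n) + 2"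
  shows "\<exists>C>0.
           smooth_on (Omega_dom k) (w_fun C p k)
         \<and> convex_on (Omega_dom k) (w_fun C p k)
         \<and> (\<forall>x\<in>Omega_dom k. det (hessian (w_fun C p k) x) \<le> \<bar>w_fun C p k x\<bar> powr (- p))
         \<and> (\<forall>x\<in>frontier (Omega_dom k). w_fun C p k x = 0)"
proof -
  define a where "a = 2 / (real CARD('n) + p)"
  define b where "b = (real CARD('n) + p - 2) / (2 * (real CARD('n) + p))"
  define C :: real where "C = 1/3"
  have Np: "real CARD('n) + p > 2" using assms by simp
  have ab: "0 < b" "b < 1" "a + 2 * b = 1"
    using aux_ab2[OF Np] aux_ab[of "real CARD('n) + p"] Np unfolding a_def b_def by (auto simp: field_simps)
  have weq: "w_fun C p k = (\<lambda>x. C * x$k - C * phi a b k x)"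
    by (simp add: fun_eq_iff w_fun_def phi_def ga_def a_def b_def)
  have detb: "det (hessian (w_fun C p k) x) \<le> \<bar>w_fun C p k x\<bar> powr (- p)" if x: "x \<in> Omega_dom k" for x
  proof -
    define t where "t = x$k"
    define g where "g = ga k x"
    define r where "r = xprime_sq k x"
    define ph where "ph = phi a b k x"
    define lam where "lam = 2*C*b*ph/g"
    define mu where "mu = 4*C*b*(1-b)*ph/g^2"
    define nu where "nu = 2*C*a*b*ph/(t*g)"
    define al where "al = C*a*(1-a)*ph/t^2"
    have pos: "t > 0" "g > 0" using Omega_pos[OF x] by (auto simp: t_def g_def)
    have r: "r \<ge> 0" "t^2 + r < 1" using x xprime_sq_nonneg[of k x] by (auto simp: r_def t_def Omega_iff)
    have g1: "g \<le> 1" "g = 1 - r" using r by (auto simp: g_def ga_def r_def)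
    have php: "ph > 0" using pos by (simp add: ph_def phi_def g_def t_def)
    have mu0: "mu \<noteq> 0" using ab pos php by (simp add: mu_def C_def)
    have H: "hessian (w_fun C p k) x =
      (\<chi> i j. if j = k then (if i = k then al else nu * x$i)
                   else (if i = k then nu * x$j else (if i = j then lam else 0) + mu * x$i * x$j))"
      unfolding weq hess_eq[OF x]
      by (simp add: vec_eq_iff al_def nu_def lam_def mu_def t_def[symmetric] g_def[symmetric] ph_def[symmetric])
    have D: "det (hessian (w_fun C p k) x) = al * lam^(CARD('n)-1) + mu * r * (al - nu^2/mu) * lam^(CARD('n)-2)"
      unfolding H r_def by (rule det_struct[OF mu0 assms(1)])
    have pt: "ph > t"
    proof -
      have "t^2 < g" using r g1 by simp
      then have "(t^2) powr b < g powr b" using ab by (intro powr_less_mono2) auto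
      then have "t powr a * (t^2) powr b < t powr a * g powr b" using pos by simp
      moreover have "t powr a * (t^2) powr b = t"
      proof -
        have "t powr a * (t^2) powr b = t powr (a + 2 * b)"
          using pos by (simp add: powr_add powr_powr flip: powr_numeral)
        then show ?thesis using ab pos by simp
      qed
      ultimately show ?thesis by (simp add: ph_def phi_def t_def g_def)
    qed
    have "al * lam^(CARD('n)-1) + mu * r * (al - nu^2/mu) * lam^(CARD('n)-2) \<le> \<bar>C * t - C * ph\<bar> powr (-p)"
    proof -
      have r1: "r \<le> 1" using r by (smt (verit) zero_le_power2)
      have phd: "ph = t powr a * g powr b" by (simp add: ph_def phi_def t_def g_def)
      show ?thesis
        by (rule final_ineq[OF pos(1) pos(2) g1(1) r(1) r1 C_def assms(1) assms(2) a_def b_def phd pt lam_def mu_def nu_def al_def])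
    qed
    moreover have "w_fun C p k x = C * t - C * ph" by (simp add: weq t_def ph_def)
    ultimately show ?thesis using D by simp
  qed
  show ?thesis
  proof (intro exI[of _ C] conjI ballI)
    show "C > 0" by (simp add: C_def)
    show "smooth_on (Omega_dom k) (w_fun C p k)" by (rule w_smooth)
    show "convex_on (Omega_dom k) (w_fun C p k)" by (rule w_convex) (use Np in \<open>auto simp: C_def\<close>)
    show "w_fun C p k x = 0" if "x \<in> frontier (Omega_dom k)" for x
      using w_frontier[of p k C] Np that by auto
    show "det (hessian (w_fun C p k) x) \<le> \<bar>w_fun C p k x\<bar> powr (- p)" if "x \<in> Omega_dom k" for x
      by (rule detb[OF that])
  qed
qed

end
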